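(* Let $0<b<a$, set $v_\infty=a+b$ (so $a<v_\infty<2a$), and let $v_0\in(a,v_\infty)$. For $\mu\in(v_0,v_\infty)$ define $$\chi_s(\mu)=\int_{v_0}^{\mu}\frac{g(\xi)}{\sqrt{\mathcal G_s(\mu)-\mathcal G_s(\xi)}}\,d\xi .$$ Then $\chi_s(\mu)$ is finite, positive and strictly increasing on $(v_0,v_\infty)$, and $\chi_s(\mu)\to+\infty$ as $\mu\to v_\infty^-$. Consequently, for every $D_L>0$ and $\ell>0$ there is a unique $\mu^\star\in(v_0,v_\infty)$ with $\chi_s(\mu^\star)=\sqrt{2/D_L}\,\ell$.
   Context: $g(\xi)=(2a-\xi)/\xi^3$, $R_s(\xi)=\xi-a-b$, and $\mathcal G_s(\xi)=-\dfrac{a(a+b)}{\xi^2}+\dfrac{3a+b}{\xi}+\log\xi$, so that $\mathcal G_s'(\xi)=-R_s(\xi)g(\xi)$. *)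

theory Defs
  imports "HOL-Analysis.Analysis"
begin

definition g_fun :: "real \<Rightarrow> real \<Rightarrow> real" where
  "g_fun a \<xi> = (2 * a - \<xi>) / \<xi> ^ 3"

definition R_s :: "real \<Rightarrow> real \<Rightarrow> real \<Rightarrow> real" where
  "R_s a b \<xi> = \<xi> - a - b"

definition G_s :: "real \<Rightarrow> real \<Rightarrow> real \<Rightarrow> real" where
  "G_s a b \<xi> = - (a * (a + b)) / \<xi> ^ 2 + (3 * a + b) / \<xi> + ln \<xi>"

text \<open>The integrand of chi_s(mu); at the endpoint xi = mu it is 0/...=0 by
  Isabelle's convention (a single point, irrelevant for the integral).\<close>
definition chi_integrand :: "real \<Rightarrow> real \<Rightarrow> real \<Rightarrow> real \<Rightarrow> real" where
  "chi_integrand a b \<mu> \<xi> = g_fun a \<xi> / sqrt (G_s a b \<mu> - G_s a b \<xi>)"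

text \<open>Henstock-Kurzweil integral over [v0, mu] (covers the improper integral).\<close>
definition chi_s :: "real \<Rightarrow> real \<Rightarrow> real \<Rightarrow> real \<Rightarrow> real" where
  "chi_s a b v0 \<mu> = integral {v0..\<mu>} (chi_integrand a b \<mu>)"

end

theory Submission
  imports Defs "HOL-Real_Asymp.Real_Asymp"
begin

lemma G_deriv_chain [derivative_intros]:
  assumes "(f has_real_derivative f') (at x within s)" "f x > 0"
  shows "((\<lambda>x. G_s a b (f x)) has_real_derivative ((a + b - f x) * g_fun a (f x) * f')) (at x within s)"
proof -
  have "((\<lambda>x. G_s a b (f x)) has_real_derivative
     ((2 * (a*(a+b)) * (f x) * f') / ((f x)^2)^2 - (3*a+b) * f' / (f x)^2 + f' / f x)) (at x within s)"
    unfolding G_s_def using assms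
    by (auto intro!: derivative_eq_intros simp: field_simps power2_eq_square)
  moreover have "(2 * (a*(a+b)) * (f x) * f') / ((f x)^2)^2 - (3*a+b) * f' / (f x)^2 + f' / f x
      = (a + b - f x) * g_fun a (f x) * f'"
    using assms(2) unfolding g_fun_def by (simp add: field_simps power2_eq_square power3_eq_cube)
  ultimately show ?thesis by simp
qed

lemma G_cont [continuous_intros]:
  assumes "continuous_on S f" "\<And>x. x \<in> S \<Longrightarrow> f x > 0"
  shows "continuous_on S (\<lambda>x. G_s a b (f x))"
  unfolding G_s_def using assms
  by (auto intro!: continuous_intros) (metis less_irrefl)+

definition kk :: "real \<Rightarrow> real \<Rightarrow> real \<Rightarrow> real \<Rightarrow> real" where
  "kk a b \<mu> \<xi> = sqrt (max 0 (G_s a b \<mu> - G_s a b \<xi>)) / (a + b - \<xi>)^2"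

context
  fixes a b v0 :: real
  assumes ab: "0 < b" "b < a" "a < v0" "v0 < a + b"
begin

lemma g_pos: "x < 2*a \<Longrightarrow> x > 0 \<Longrightarrow> g_fun a x > 0"
  unfolding g_fun_def by simp

lemma G_less: assumes "v0 \<le> x" "x < y" "y \<le> a+b" shows "G_s a b x < G_s a b y"
proof (rule DERIV_pos_imp_increasing_open[OF assms(2)])
  fix t assume t: "x < t" "t < y"
  have "(G_s a b has_real_derivative ((a + b - t) * g_fun a t * 1)) (at t)"
    using G_deriv_chain[of "\<lambda>x. x" 1 t UNIV a b] t assms ab by auto
  moreover have "(a + b - t) * g_fun a t * 1 > 0"
    using t assms ab g_pos[of t] by auto
  ultimately show "\<exists>y. (G_s a b has_real_derivative y) (at t) \<and> 0 < y" by blast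
next
  show "continuous_on {x..y} (G_s a b)"
    using G_cont[of "{x..y}" "\<lambda>x. x" a b] assms ab by (auto intro: continuous_on_id)
qed

lemma G_le: "v0 \<le> x \<Longrightarrow> x \<le> y \<Longrightarrow> y \<le> a+b \<Longrightarrow> G_s a b x \<le> G_s a b y"
  using G_less by (cases "x = y") (auto simp: order.order_iff_strict)

lemma kk_nonneg: "\<xi> < a + b \<Longrightarrow> kk a b \<mu> \<xi> \<ge> 0"
  unfolding kk_def by auto

lemma kk_zero: "v0 \<le> \<mu> \<Longrightarrow> \<mu> \<le> \<xi> \<Longrightarrow> \<xi> < a+b \<Longrightarrow> kk a b \<mu> \<xi> = 0"
  unfolding kk_def using G_le[of \<mu> \<xi>] by auto

lemma kk_mono: "v0 \<le> \<mu>1 \<Longrightarrow> \<mu>1 \<le> \<mu>2 \<Longrightarrow> \<mu>2 \<le> a+b \<Longrightarrow> \<xi> < a+b \<Longrightarrow> kk a b \<mu>1 \<xi> \<le> kk a b \<mu>2 \<xi>"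
  unfolding kk_def using G_le[of \<mu>1 \<mu>2]
  by (intro divide_right_mono real_sqrt_le_mono) auto

lemma kk_cont2: "M < a+b \<Longrightarrow> continuous_on ({v0..M} \<times> {v0..M}) (\<lambda>(x,t). kk a b x t)"
  unfolding kk_def case_prod_beta using ab
  by (intro continuous_intros) auto

lemma kk_cont1: "M < a+b \<Longrightarrow> continuous_on {v0..M} (kk a b \<mu>)"
  unfolding kk_def using ab
  by (intro continuous_intros) auto


lemma main_eq:
  assumes mu: "v0 < \<mu>" "\<mu> < a + b"
  shows "(chi_integrand a b \<mu> has_integral
     (2 * sqrt (G_s a b \<mu> - G_s a b v0) / (a + b - v0) + 2 * integral {v0..\<mu>} (kk a b \<mu>))) {v0..\<mu>}"
proof -
  define \<Phi> where "\<Phi> \<xi> = -2 * sqrt (G_s a b \<mu> - G_s a b \<xi>) / (a + b - \<xi>) + 2 * integral {v0..\<xi>} (kk a b \<mu>)" for \<xi>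
  have contk: "continuous_on {v0..\<mu>} (kk a b \<mu>)" using kk_cont1 mu by auto
  have "continuous_on {v0..\<mu>} \<Phi>"
    unfolding \<Phi>_def using ab mu
    by (intro continuous_intros indefinite_integral_continuous_1 integrable_continuous_real contk) auto
  moreover have "(\<Phi> has_vector_derivative chi_integrand a b \<mu> \<xi>) (at \<xi>)" if xi: "\<xi> \<in> {v0<..<\<mu>}" for \<xi>
  proof -
    have Dpos: "G_s a b \<mu> - G_s a b \<xi> > 0" using G_less[of \<xi> \<mu>] xi mu by auto
    have vx: "a + b - \<xi> > 0" "\<xi> > 0" using xi mu ab by auto
    have d1: "((\<lambda>\<xi>. -2 * sqrt (G_s a b \<mu> - G_s a b \<xi>) / (a + b - \<xi>)) has_real_derivative
       (g_fun a \<xi> / sqrt (G_s a b \<mu> - G_s a b \<xi>) - 2 * sqrt (G_s a b \<mu> - G_s a b \<xi>) / (a + b - \<xi>)^2)) (at \<xi>)"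
    proof -
      define s where "s = sqrt (G_s a b \<mu> - G_s a b \<xi>)"
      have s: "s > 0" "G_s a b \<mu> = G_s a b \<xi> + s^2" using Dpos unfolding s_def by auto
      show ?thesis unfolding s(2) using s vx
        apply (auto intro!: derivative_eq_intros)
        apply (simp add: divide_simps)
        apply (simp add: algebra_simps power2_eq_square)
        done
    qed
    have d2: "((\<lambda>\<xi>. integral {v0..\<xi>} (kk a b \<mu>)) has_real_derivative kk a b \<mu> \<xi>) (at \<xi>)"
      using integral_has_real_derivative[OF contk, of \<xi>] xi at_within_Icc_at[of v0 \<xi> \<mu>] by auto
    have "(\<Phi> has_real_derivative
       (g_fun a \<xi> / sqrt (G_s a b \<mu> - G_s a b \<xi>) - 2 * sqrt (G_s a b \<mu> - G_s a b \<xi>) / (a + b - \<xi>)^2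
        + 2 * kk a b \<mu> \<xi>)) (at \<xi>)"
      unfolding \<Phi>_def by (intro derivative_intros d1 d2 DERIV_cmult)
    moreover have "g_fun a \<xi> / sqrt (G_s a b \<mu> - G_s a b \<xi>) - 2 * sqrt (G_s a b \<mu> - G_s a b \<xi>) / (a + b - \<xi>)^2
        + 2 * kk a b \<mu> \<xi> = chi_integrand a b \<mu> \<xi>"
      using Dpos unfolding kk_def chi_integrand_def by simp
    ultimately show ?thesis by (simp add: has_real_derivative_iff_has_vector_derivative)
  qed
  ultimately have "(chi_integrand a b \<mu> has_integral (\<Phi> \<mu> - \<Phi> v0)) {v0..\<mu>}"
    using mu by (intro fundamental_theorem_of_calculus_interior) auto
  moreover have "\<Phi> \<mu> - \<Phi> v0 = 2 * sqrt (G_s a b \<mu> - G_s a b v0) / (a + b - v0) + 2 * integral {v0..\<mu>} (kk a b \<mu>)"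
    unfolding \<Phi>_def by simp
  ultimately show ?thesis by simp
qed


lemma kk_int: "M < a + b \<Longrightarrow> kk a b \<mu> integrable_on {v0..M}"
  using kk_cont1 integrable_continuous_real by blast

lemma J_fix:
  assumes "v0 \<le> \<mu>" "\<mu> \<le> M" "M < a + b"
  shows "integral {v0..\<mu>} (kk a b \<mu>) = integral {v0..M} (kk a b \<mu>)"
proof -
  have int: "kk a b \<mu> integrable_on {v0..M}"
    using kk_cont1[OF assms(3)] by (rule integrable_continuous_real)
  have "integral {\<mu>..M} (kk a b \<mu>) = integral {\<mu>..M} (\<lambda>_. 0)"
    by (rule integral_cong) (use kk_zero assms in auto)
  then have "integral {\<mu>..M} (kk a b \<mu>) = 0" by simp
  with Henstock_Kurzweil_Integration.integral_combine[OF assms(1,2) int] show ?thesis by simp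
qed

lemma chi_formula:
  assumes "v0 < \<mu>" "\<mu> < a + b"
  shows "chi_integrand a b \<mu> integrable_on {v0..\<mu>}"
    and "chi_s a b v0 \<mu> = 2 * sqrt (G_s a b \<mu> - G_s a b v0) / (a + b - v0) + 2 * integral {v0..\<mu>} (kk a b \<mu>)"
  using main_eq[OF assms] unfolding chi_s_def by (auto simp: integral_unique)

lemma J_nonneg: "\<mu> < a + b \<Longrightarrow> integral {v0..\<mu>} (kk a b \<mu>) \<ge> 0"
  by (rule integral_nonneg) (use integrable_continuous_real[OF kk_cont1[of \<mu> \<mu>]] kk_nonneg in auto)

lemma chi_pos: "v0 < \<mu> \<Longrightarrow> \<mu> < a + b \<Longrightarrow> chi_s a b v0 \<mu> > 0"
proof -
  assume "v0 < \<mu>" "\<mu> < a + b"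
  moreover have "2 * sqrt (G_s a b \<mu> - G_s a b v0) / (a + b - v0) > 0"
    using G_less[of v0 \<mu>] ab \<open>v0 < \<mu>\<close> \<open>\<mu> < a + b\<close> by (intro divide_pos_pos) auto
  ultimately show ?thesis using chi_formula(2)[of \<mu>] J_nonneg[of \<mu>] by auto
qed

lemma chi_mono:
  assumes "v0 < \<mu>1" "\<mu>1 < \<mu>2" "\<mu>2 < a + b"
  shows "chi_s a b v0 \<mu>1 < chi_s a b v0 \<mu>2"
proof -
  have "integral {v0..\<mu>1} (kk a b \<mu>1) = integral {v0..\<mu>2} (kk a b \<mu>1)"
    using J_fix assms by auto
  also have "\<dots> \<le> integral {v0..\<mu>2} (kk a b \<mu>2)"
    by (rule integral_le) (use kk_int kk_mono assms in auto)
  finally have J: "integral {v0..\<mu>1} (kk a b \<mu>1) \<le> integral {v0..\<mu>2} (kk a b \<mu>2)" .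
  have "G_s a b \<mu>1 < G_s a b \<mu>2" using G_less assms by auto
  then have "sqrt (G_s a b \<mu>1 - G_s a b v0) < sqrt (G_s a b \<mu>2 - G_s a b v0)" by simp
  then have "2 * sqrt (G_s a b \<mu>1 - G_s a b v0) / (a + b - v0) < 2 * sqrt (G_s a b \<mu>2 - G_s a b v0) / (a + b - v0)"
    using ab by (intro divide_strict_right_mono) auto
  with J show ?thesis using chi_formula(2) assms by auto
qed

lemma g_ge: "v0 \<le> x \<Longrightarrow> x \<le> a + b \<Longrightarrow> g_fun a x \<ge> (a - b) / (a + b)^3"
  unfolding g_fun_def using ab
  by (intro frac_le power_mono) auto

lemma G_quad:
  assumes "v0 \<le> \<xi>" "\<xi> \<le> \<mu>" "\<mu> \<le> a + b"
  shows "G_s a b \<mu> - G_s a b \<xi> \<ge> (a - b) / (a + b)^3 / 2 * ((a + b - \<xi>)^2 - (a + b - \<mu>)^2)"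
proof -
  define c where "c = (a - b) / (a + b)^3"
  define Q where "Q x = G_s a b x + c / 2 * (a + b - x)^2" for x
  have "Q \<xi> \<le> Q \<mu>"
  proof (rule DERIV_nonneg_imp_increasing_open[OF assms(2)])
    fix t assume t: "\<xi> < t" "t < \<mu>"
    have "(Q has_real_derivative ((a + b - t) * g_fun a t * 1 + c / 2 * (2 * (a + b - t) * (0 - 1)))) (at t)"
      unfolding Q_def using t assms ab by (auto intro!: derivative_eq_intros)
    moreover have "(a + b - t) * g_fun a t * 1 + c / 2 * (2 * (a + b - t) * (0 - 1)) = (a + b - t) * (g_fun a t - c)"
      by (simp add: algebra_simps)
    moreover have "(a + b - t) * (g_fun a t - c) \<ge> 0"
      using g_ge[of t] t assms unfolding c_def by auto
    ultimately show "\<exists>y. (Q has_real_derivative y) (at t) \<and> 0 \<le> y" by metis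
  next
    show "continuous_on {\<xi>..\<mu>} Q" unfolding Q_def using assms ab
      by (intro continuous_intros) auto
  qed
  then show ?thesis unfolding Q_def c_def by (simp add: algebra_simps)
qed



lemma chi_lower:
  assumes mu: "(v0 + (a + b)) / 2 \<le> \<mu>" "\<mu> < a + b"
  defines "\<kappa> \<equiv> sqrt ((a - b) / (a + b)^3 / 8)"
  shows "chi_s a b v0 \<mu> \<ge> 2 * \<kappa> * (ln (a + b - v0) - ln 2) + 2 * \<kappa> * (- ln (a + b - \<mu>))"
proof -
  define v where "v = a + b"
  define m where "m = 2 * \<mu> - v"
  define c where "c = (a - b) / (a + b)^3"
  have c: "c > 0" unfolding c_def using ab by auto
  have m: "v0 \<le> m" "m \<le> \<mu>" "v - m = 2 * (v - \<mu>)" using mu unfolding m_def v_def by auto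
  have mu0: "v0 < \<mu>" using mu ab by auto
  have "integral {v0..m} (kk a b \<mu>) \<le> integral {v0..\<mu>} (kk a b \<mu>)"
    by (rule integral_subset_le) (use m mu kk_int kk_nonneg in \<open>auto simp: v_def\<close>)
  moreover have "integral {v0..m} (\<lambda>\<xi>. \<kappa> / (v - \<xi>)) \<le> integral {v0..m} (kk a b \<mu>)"
  proof (rule integral_le)
    show "(\<lambda>\<xi>. \<kappa> / (v - \<xi>)) integrable_on {v0..m}"
      using m mu unfolding v_def by (intro integrable_continuous_real continuous_intros) auto
    show "kk a b \<mu> integrable_on {v0..m}" using kk_int m mu by auto
    fix \<xi> assume xi: "\<xi> \<in> {v0..m}"
    define t where "t = v - \<xi>"
    have t: "t \<ge> 2 * (v - \<mu>)" "v - \<mu> > 0" using xi m mu unfolding t_def v_def by auto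
    have "G_s a b \<mu> - G_s a b \<xi> \<ge> c / 2 * (t^2 - (v - \<mu>)^2)"
      using G_quad[of \<xi> \<mu>] xi m mu unfolding t_def v_def c_def by auto
    moreover have "c / 2 * (t^2 - (v - \<mu>)^2) \<ge> c / 8 * t^2"
    proof -
      have "(v - \<mu>)^2 \<le> (t / 2)^2" using t by (intro power_mono) auto
      moreover have "(t / 2)^2 = t^2 / 4" by (simp add: power_divide)
      moreover have "t^2 \<ge> 0" by simp
      ultimately have "t^2 - (v - \<mu>)^2 \<ge> t^2 / 4" by linarith
      then show ?thesis using c by (simp add: field_simps)
    qed
    ultimately have "max 0 (G_s a b \<mu> - G_s a b \<xi>) \<ge> c / 8 * t^2" by linarith
    then have "sqrt (max 0 (G_s a b \<mu> - G_s a b \<xi>)) \<ge> sqrt (c / 8 * t^2)" by (rule real_sqrt_le_mono)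
    also have "sqrt (c / 8 * t^2) = \<kappa> * t"
    proof -
      have "sqrt (c / 8 * t^2) = sqrt (c / 8) * sqrt (t^2)" by (rule real_sqrt_mult)
      then show ?thesis using t unfolding \<kappa>_def c_def by simp
    qed
    finally have "kk a b \<mu> \<xi> \<ge> \<kappa> * t / t^2" unfolding kk_def t_def v_def
      by (intro divide_right_mono) auto
    moreover have "\<kappa> * t / t^2 = \<kappa> / (v - \<xi>)" using t unfolding t_def by (simp add: power2_eq_square)
    ultimately show "\<kappa> / (v - \<xi>) \<le> kk a b \<mu> \<xi>" by simp
  qed
  moreover have "((\<lambda>\<xi>. \<kappa> / (v - \<xi>)) has_integral ((- \<kappa> * ln (v - m)) - (- \<kappa> * ln (v - v0)))) {v0..m}"
  proof (rule fundamental_theorem_of_calculus_interior)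
    show "v0 \<le> m" using m by simp
    show "continuous_on {v0..m} (\<lambda>\<xi>. - \<kappa> * ln (v - \<xi>))"
      using m mu unfolding v_def by (intro continuous_intros) auto
    fix x assume x: "x \<in> {v0<..<m}"
    then have "v - x > 0" using m mu unfolding v_def by auto
    then have "((\<lambda>\<xi>. - \<kappa> * ln (v - \<xi>)) has_real_derivative (\<kappa> / (v - x))) (at x)"
      by (auto intro!: derivative_eq_intros simp: field_simps)
    then show "((\<lambda>\<xi>. - \<kappa> * ln (v - \<xi>)) has_vector_derivative (\<kappa> / (v - x))) (at x)"
      by (simp add: has_real_derivative_iff_has_vector_derivative)
  qed
  ultimately have "integral {v0..\<mu>} (kk a b \<mu>) \<ge> \<kappa> * ln (v - v0) - \<kappa> * ln (v - m)"
    by (simp add: integral_unique)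
  moreover have "ln (v - m) = ln 2 + ln (v - \<mu>)"
  proof -
    have "v - \<mu> > 0" using mu unfolding v_def by auto
    then have "ln (2 * (v - \<mu>)) = ln 2 + ln (v - \<mu>)" using ln_mult[of 2 "v - \<mu>"] by simp
    then show ?thesis using m(3) by (metis)
  qed
  moreover have "2 * sqrt (G_s a b \<mu> - G_s a b v0) / (a + b - v0) \<ge> 0"
    using G_le[of v0 \<mu>] mu0 mu ab by auto
  ultimately show ?thesis using chi_formula(2)[OF mu0 mu(2)] unfolding v_def by (simp add: algebra_simps)
qed

lemma chi_lim: "filterlim (chi_s a b v0) at_top (at_left (a + b))"
proof -
  define \<kappa> where "\<kappa> = sqrt ((a - b) / (a + b)^3 / 8)"
  have k: "\<kappa> > 0" unfolding \<kappa>_def using ab by auto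
  have "((\<lambda>\<mu>. a + b - \<mu>) \<longlongrightarrow> 0) (at_left (a + b))"
    by (auto intro!: tendsto_eq_intros)
  moreover have "eventually (\<lambda>\<mu>. a + b - \<mu> > 0) (at_left (a + b))"
    by (auto simp: eventually_at_filter)
  ultimately have "filterlim (\<lambda>\<mu>. a + b - \<mu>) (at_right 0) (at_left (a + b))"
    by (rule tendsto_imp_filterlim_at_right)
  then have "filterlim (\<lambda>\<mu>. ln (a + b - \<mu>)) at_bot (at_left (a + b))"
    by (rule filterlim_compose[OF ln_at_0])
  then have "filterlim (\<lambda>\<mu>. - ln (a + b - \<mu>)) at_top (at_left (a + b))"
    by (simp add: filterlim_uminus_at_top)
  then have "filterlim (\<lambda>\<mu>. 2 * \<kappa> * (- ln (a + b - \<mu>))) at_top (at_left (a + b))"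
    using k by (intro filterlim_tendsto_pos_mult_at_top[OF tendsto_const]) auto
  then have "filterlim (\<lambda>\<mu>. 2 * \<kappa> * (ln (a + b - v0) - ln 2) + 2 * \<kappa> * (- ln (a + b - \<mu>))) at_top (at_left (a + b))"
    by (intro filterlim_tendsto_add_at_top[OF tendsto_const])
  moreover have "eventually (\<lambda>\<mu>. 2 * \<kappa> * (ln (a + b - v0) - ln 2) + 2 * \<kappa> * (- ln (a + b - \<mu>)) \<le> chi_s a b v0 \<mu>) (at_left (a + b))"
    unfolding eventually_at_left_field
    by (rule exI[of _ "(v0 + (a + b)) / 2"]) (use ab chi_lower in \<open>auto simp: \<kappa>_def\<close>)
  ultimately show ?thesis by (rule filterlim_at_top_mono)
qed



lemma chi_exists:
  assumes y: "y > 0"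
  shows "\<exists>\<mu>. \<mu> \<in> {v0<..<a + b} \<and> chi_s a b v0 \<mu> = y"
proof -
  have "eventually (\<lambda>\<mu>. y \<le> chi_s a b v0 \<mu>) (at_left (a + b))"
    using chi_lim unfolding filterlim_at_top by auto
  then obtain b' where b': "b' < a + b" "\<And>z. b' < z \<Longrightarrow> z < a + b \<Longrightarrow> y \<le> chi_s a b v0 z"
    unfolding eventually_at_left_field by auto
  define \<mu>2 where "\<mu>2 = (max b' v0 + (a + b)) / 2"
  have m2: "v0 < \<mu>2" "\<mu>2 < a + b" "b' < \<mu>2" using b' ab unfolding \<mu>2_def by auto
  have y2: "y \<le> chi_s a b v0 \<mu>2" using b' m2 by auto
  define F where "F \<mu> = 2 * sqrt (G_s a b \<mu> - G_s a b v0) / (a + b - v0) + 2 * integral {v0..\<mu>2} (kk a b \<mu>)" for \<mu>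
  have "continuous_on {v0..\<mu>2} (\<lambda>\<mu>. integral (cbox v0 \<mu>2) (kk a b \<mu>))"
    by (rule integral_continuous_on_param) (use kk_cont2[of \<mu>2] m2 in \<open>simp add: cbox_interval\<close>)
  then have "continuous_on {v0..\<mu>2} (\<lambda>\<mu>. integral {v0..\<mu>2} (kk a b \<mu>))" by (simp add: cbox_interval)
  then have contF: "continuous_on {v0..\<mu>2} F" unfolding F_def using ab
    by (intro continuous_intros) auto
  have F0: "F v0 = 0"
  proof -
    have "integral {v0..v0} (kk a b v0) = integral {v0..\<mu>2} (kk a b v0)" using J_fix[of v0 \<mu>2] m2 by auto
    then show ?thesis unfolding F_def by simp
  qed
  have Fchi: "F \<mu> = chi_s a b v0 \<mu>" if "v0 < \<mu>" "\<mu> \<le> \<mu>2" for \<mu>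
    unfolding F_def using chi_formula(2)[of \<mu>] J_fix[of \<mu> \<mu>2] that m2 by auto
  obtain x where x: "v0 \<le> x" "x \<le> \<mu>2" "F x = y"
    using IVT'[of F v0 y \<mu>2] F0 y y2 Fchi[of \<mu>2] m2 contF by auto
  have "x \<noteq> v0" using x F0 y by auto
  then show ?thesis using x Fchi[of x] m2 by (intro exI[of _ x]) auto
qed


end

theorem mainTheorem5:
  fixes a b v0 :: real
  assumes "0 < b" and "b < a"
    and "a < v0" and "v0 < a + b"
  shows "(\<forall>\<mu>\<in>{v0<..<a + b}. chi_integrand a b \<mu> integrable_on {v0..\<mu>} \<and> chi_s a b v0 \<mu> > 0)
    \<and> strict_mono_on {v0<..<a + b} (chi_s a b v0)
    \<and> filterlim (chi_s a b v0) at_top (at_left (a + b))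
    \<and> (\<forall>D_L ell. D_L > 0 \<longrightarrow> ell > 0 \<longrightarrow>
         (\<exists>!\<mu>. \<mu> \<in> {v0<..<a + b} \<and> chi_s a b v0 \<mu> = sqrt (2 / D_L) * ell))"
proof (intro conjI allI impI ballI)
  fix \<mu> assume "\<mu> \<in> {v0<..<a + b}"
  then show "chi_integrand a b \<mu> integrable_on {v0..\<mu>}" "chi_s a b v0 \<mu> > 0"
    using chi_formula(1)[OF assms] chi_pos[OF assms] by auto
next
  show sm: "strict_mono_on {v0<..<a + b} (chi_s a b v0)"
    using chi_mono[OF assms] by (auto intro!: strict_mono_onI)
  show "filterlim (chi_s a b v0) at_top (at_left (a + b))" using chi_lim[OF assms] .
  fix D_L ell :: real assume "D_L > 0" "ell > 0"
  then have y: "sqrt (2 / D_L) * ell > 0" by auto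
  obtain \<mu> where mu: "\<mu> \<in> {v0<..<a + b}" "chi_s a b v0 \<mu> = sqrt (2 / D_L) * ell"
    using chi_exists[OF assms y] by blast
  show "\<exists>!\<mu>. \<mu> \<in> {v0<..<a + b} \<and> chi_s a b v0 \<mu> = sqrt (2 / D_L) * ell"
  proof (rule ex1I[of _ \<mu>])
    show "\<mu> \<in> {v0<..<a + b} \<and> chi_s a b v0 \<mu> = sqrt (2 / D_L) * ell" using mu by auto
    fix \<nu> assume nu: "\<nu> \<in> {v0<..<a + b} \<and> chi_s a b v0 \<nu> = sqrt (2 / D_L) * ell"
    show "\<nu> = \<mu>"
    proof (rule ccontr)
      assume "\<nu> \<noteq> \<mu>"
      then consider "\<nu> < \<mu>" | "\<mu> < \<nu>" by linarith
      then show False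
      proof cases
        case 1 then have "chi_s a b v0 \<nu> < chi_s a b v0 \<mu>" using sm nu mu unfolding strict_mono_on_def by blast
        then show False using nu mu by simp
      next
        case 2 then have "chi_s a b v0 \<mu> < chi_s a b v0 \<nu>" using sm nu mu unfolding strict_mono_on_def by blast
        then show False using nu mu by simp
      qed
    qed
  qed
qed

end
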